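(* Let $\alpha\in(0,1)$. Let $\hat C_\alpha(X_{n+1})$ be the full conformal prediction region and $\tilde C_\alpha(X_{n+1})$ the upper approximate full conformal prediction region built from approximate scores $\tilde S_{D^y}$ and bounds $\tau_1(y),\dots,\tau_{n+1}(y)$ as described in the context. Then $\hat C_\alpha(X_{n+1})\subseteq \tilde C_\alpha(X_{n+1})$. Consequently, if $(X_1,Y_1),\dots,(X_{n+1},Y_{n+1})$ are exchangeable and the predictor $\hat f_D$ is invariant to permutations of the data in $D$, then $$\mathbb P\big[Y_{n+1}\in\tilde C_\alpha(X_{n+1})\big]\ \ge\ \mathbb P\big[Y_{n+1}\in \hat C_\alpha(X_{n+1})\big]\ \ge\ 1-\alpha .$$
   Context: Let $\mathcal X\subset\mathbb R^d$, $\mathcal Y\subset\mathbb R$. $D=\{(X_1,Y_1),\dots,(X_n,Y_n)\}$ are random variables with values in $\mathcal X\times\mathcal Y$ and $(X_{n+1},Y_{n+1})$ is a further random pair of which only $X_{n+1}$ is observed. For $y\in\mathcal Y$ let $D^y=\{(X_1,Y_1),\dots,(X_n,Y_n),(X_{n+1},y)\}$ and let $\hat f_{D^y}:\mathcal X\to\mathcal Y$ be a predictor trained on $D^y$. Given a non-conformity function $s:\mathcal Y\times\mathcal Y\to\mathbb R_+$, the non-conformity scores are $S_{D^y}(X_i,Y_i)=s(Y_i,\hat f_{D^y}(X_i))$ for $1\le i\le n$ and $S_{D^y}(X_{n+1},y)=s(y,\hat f_{D^y}(X_{n+1}))$. The full conformal p-value is $\hat\pi_D(X_{n+1},y)=\frac{1+\sum_{i=1}^n\mathbb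 1\{S_{D^y}(X_i,Y_i)\ge S_{D^y}(X_{n+1},y)\}}{n+1}$ and the full conformal prediction region is $\hat C_\alpha(X_{n+1})=\{y\in\mathcal Y:\hat\pi_D(X_{n+1},y)>\alpha\}$. Approximation scheme: for every $y\in\mathcal Y$ let $\tilde S_{D^y}(X_i,Y_i)$ ($1\le i\le n$) and $\tilde S_{D^y}(X_{n+1},y)$ be real numbers (approximate scores) and $0\le\tau_i(y)<\infty$ ($1\le i\le n+1$) be such that $|S_{D^y}(X_i,Y_i)-\tilde S_{D^y}(X_i,Y_i)|\le\tau_i(y)$ for $1\le i\le n$ and $|S_{D^y}(X_{n+1},y)-\tilde S_{D^y}(X_{n+1},y)|\le\tau_{n+1}(y)$. The upper approximate p-value is $\tilde\pi_D(X_{n+1},y)=\frac{1+\sum_{i=1}^n\mathbb 1\{\tilde S_{D^y}(X_i,Y_i)+\tau_i(y)\ge\tilde S_{D^y}(X_{n+1},y)-\tau_{n+1}(y)\}}{n+1}$ and the upper approximate full conformal region is $\tilde C_\alpha(X_{n+1})=\{y\in\mathcal Y:\tilde\pi_D(X_{n+1},y)>\alpha\}$. *)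

theory Defs
  imports "HOL-Probability.Probability"
begin

text \<open>Data sets are lists of pairs (X_i, Y_i); list position i-1 holds the i-th pair.
  A predictor-training procedure is a map from a training list to a predictor.\<close>

definition augment :: "('a \<times> real) list \<Rightarrow> 'a \<Rightarrow> real \<Rightarrow> ('a \<times> real) list" where
  "augment D x y = D @ [(x, y)]"

definition conf_score ::
  "(('a \<times> real) list \<Rightarrow> 'a \<Rightarrow> real) \<Rightarrow> (real \<Rightarrow> real \<Rightarrow> real)
   \<Rightarrow> ('a \<times> real) list \<Rightarrow> 'a \<Rightarrow> real \<Rightarrow> nat \<Rightarrow> real" where
  "conf_score fit s D x y i =
     (let Dy = augment D x y in s (snd (Dy ! (i - 1))) (fit Dy (fst (Dy ! (i - 1)))))"

definition full_pvalue ::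
  "(('a \<times> real) list \<Rightarrow> 'a \<Rightarrow> real) \<Rightarrow> (real \<Rightarrow> real \<Rightarrow> real)
   \<Rightarrow> ('a \<times> real) list \<Rightarrow> 'a \<Rightarrow> real \<Rightarrow> real" where
  "full_pvalue fit s D x y =
     (1 + real (card {i \<in> {1..length D}.
                 conf_score fit s D x y i \<ge> conf_score fit s D x y (length D + 1)}))
     / (real (length D) + 1)"

definition full_region ::
  "real set \<Rightarrow> (('a \<times> real) list \<Rightarrow> 'a \<Rightarrow> real) \<Rightarrow> (real \<Rightarrow> real \<Rightarrow> real)
   \<Rightarrow> ('a \<times> real) list \<Rightarrow> 'a \<Rightarrow> real \<Rightarrow> real set" where
  "full_region Ys fit s D x \<alpha> = {y \<in> Ys. full_pvalue fit s D x y > \<alpha>}"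

definition approx_pvalue ::
  "nat \<Rightarrow> (real \<Rightarrow> nat \<Rightarrow> real) \<Rightarrow> (real \<Rightarrow> nat \<Rightarrow> real) \<Rightarrow> real \<Rightarrow> real" where
  "approx_pvalue n St tau y =
     (1 + real (card {i \<in> {1..n}. St y i + tau y i \<ge> St y (n + 1) - tau y (n + 1)}))
     / (real n + 1)"

definition approx_region ::
  "real set \<Rightarrow> nat \<Rightarrow> (real \<Rightarrow> nat \<Rightarrow> real) \<Rightarrow> (real \<Rightarrow> nat \<Rightarrow> real) \<Rightarrow> real \<Rightarrow> real set" where
  "approx_region Ys n St tau \<alpha> = {y \<in> Ys. approx_pvalue n St tau y > \<alpha>}"

definition full_cover_set ::
  "real set \<Rightarrow> (('a::euclidean_space \<times> real) list \<Rightarrow> 'a \<Rightarrow> real) \<Rightarrow> (real \<Rightarrow> real \<Rightarrow> real)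
   \<Rightarrow> nat \<Rightarrow> real \<Rightarrow> (nat \<Rightarrow> 'a \<times> real) set" where
  "full_cover_set Ys fit s n \<alpha> =
     {z \<in> space (PiM {1..n+1} (\<lambda>_. borel)).
        snd (z (n+1)) \<in> full_region Ys fit s (map z [1..<n+1]) (fst (z (n+1))) \<alpha>}"

end

theory Submission
  imports Defs
begin


lemma count_fail:
  fixes R :: "nat \<Rightarrow> real" and c :: real
  assumes "finite I" "0 \<le> c"
  shows "real (card {j\<in>I. real (card {k\<in>I. R k \<ge> R j}) \<le> c}) \<le> c"
proof -
  define F where "F = {j\<in>I. real (card {k\<in>I. R k \<ge> R j}) \<le> c}"
  have fin: "finite F" using assms by (simp add: F_def)
  have "real (card F) \<le> c"
  proof (cases "F = {}")
    case True
    then show ?thesis using assms by simp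
  next
    case False
    obtain j0 where j0: "j0 \<in> F" "\<And>j. j \<in> F \<Longrightarrow> R j0 \<le> R j"
    proof -
      have "Min (R ` F) \<in> R ` F" using fin False by (intro Min_in) auto
      then obtain j0 where "j0 \<in> F" "R j0 = Min (R ` F)" by auto
      moreover have "\<And>j. j \<in> F \<Longrightarrow> Min (R ` F) \<le> R j" using fin by (intro Min_le) auto
      ultimately show ?thesis using that by metis
    qed
    have "F \<subseteq> {k\<in>I. R k \<ge> R j0}" using j0 by (auto simp: F_def)
    then have "card F \<le> card {k\<in>I. R k \<ge> R j0}" using assms by (intro card_mono) auto
    then show ?thesis using j0(1) by (auto simp: F_def)
  qed
  then show ?thesis by (simp add: F_def)
qed


lemma key:
  fixes z :: "nat \<Rightarrow> 'a \<times> real" and fit :: "('a \<times> real) list \<Rightarrow> 'a \<Rightarrow> real" and s :: "real \<Rightarrow> real \<Rightarrow> real"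
  assumes inv: "\<And>D1 D2. mset D1 = mset D2 \<Longrightarrow> fit D1 = fit D2"
    and j: "j \<in> {1..n+1}"
  defines "\<sigma> \<equiv> Transposition.transpose j (n+1)"
  defines "w \<equiv> (\<lambda>i\<in>{1..n+1}. z (\<sigma> i))"
  defines "R \<equiv> (\<lambda>k. s (snd (z k)) (fit (map z [1..<n+2]) (fst (z k))))"
  shows "full_pvalue fit s (map w [1..<n+1]) (fst (w (n+1))) (snd (w (n+1)))
        = real (card {k\<in>{1..n+1}. R k \<ge> R j}) / (real n + 1)"
proof -
  have perm: "\<sigma> permutes {1..n+1}" unfolding \<sigma>_def using j by (intro permutes_swap_id) auto
  have wn: "w (n+1) = z j" by (simp add: w_def \<sigma>_def)
  have aug: "augment (map w [1..<n+1]) (fst (w (n+1))) (snd (w (n+1))) = map (z \<circ> \<sigma>) [1..<n+2]"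
  proof -
    have "map w [1..<n+1] = map (z \<circ> \<sigma>) [1..<n+1]" by (auto simp: w_def)
    moreover have "\<sigma> (n+1) = j" by (simp add: \<sigma>_def)
    moreover have "[1..<n+2] = [1..<n+1] @ [n+1]" by simp
    ultimately show ?thesis unfolding augment_def wn by (simp only: map_append) simp
  qed
  have "mset (map (z \<circ> \<sigma>) [1..<n+2]) = image_mset z (image_mset \<sigma> (mset_set {1..<n+2}))"
    by (simp only: mset_map map_map[symmetric] mset_upt)
  also have "image_mset \<sigma> (mset_set {1..<n+2}) = mset_set {1..<n+2}"
  proof -
    have "{1..<n+2} = {1..n+1}" by auto
    then show ?thesis using perm
      by (simp add: image_mset_mset_set permutes_inj_on permutes_image)
  qed
  also have "image_mset z (mset_set {1..<n+2}) = mset (map z [1..<n+2])"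
    by (simp only: mset_map mset_upt)
  finally have fiteq: "fit (map (z \<circ> \<sigma>) [1..<n+2]) = fit (map z [1..<n+2])" by (rule inv)
  have sc: "conf_score fit s (map w [1..<n+1]) (fst (w (n+1))) (snd (w (n+1))) i = R (\<sigma> i)"
    if "i \<in> {1..n+1}" for i
  proof -
    have "map (z \<circ> \<sigma>) [1..<n+2] ! (i - 1) = z (\<sigma> i)"
    proof -
      have "i - 1 < length [1..<n+2]" using that by auto
      then have "map (z \<circ> \<sigma>) [1..<n+2] ! (i - 1) = (z \<circ> \<sigma>) ([1..<n+2] ! (i - 1))"
        by (rule nth_map)
      also have "[1..<n+2] ! (i - 1) = i" using that by (subst nth_upt) auto
      finally show ?thesis by (simp only: o_apply comp_def)
    qed
    then show ?thesis unfolding conf_score_def Let_def aug fiteq R_def by (simp only:)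
  qed
  have len: "length (map w [1..<n+1]) = n" by (simp only: length_map length_upt diff_add_inverse2)
  have A: "{i\<in>{1..length (map w [1..<n+1])}.
           conf_score fit s (map w [1..<n+1]) (fst (w (n+1))) (snd (w (n+1))) i
           \<ge> conf_score fit s (map w [1..<n+1]) (fst (w (n+1))) (snd (w (n+1))) (length (map w [1..<n+1]) + 1)}
        = {i\<in>{1..n}. R (\<sigma> i) \<ge> R j}"
  proof -
    have sn: "conf_score fit s (map w [1..<n+1]) (fst (w (n+1))) (snd (w (n+1))) (n + 1) = R j"
      using sc[of "n+1"] by (simp add: \<sigma>_def)
    have len: "length (map w [1..<n+1]) = n" by (simp only: length_map length_upt diff_add_inverse2)
    show ?thesis unfolding len
    proof (intro Collect_cong conj_cong refl)
      fix i assume "i \<in> {1..n}"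
      then have "i \<in> {1..n+1}" by simp
      then show "(conf_score fit s (map w [1..<n+1]) (fst (w (n+1))) (snd (w (n+1))) i
           \<ge> conf_score fit s (map w [1..<n+1]) (fst (w (n+1))) (snd (w (n+1))) (n + 1))
           = (R (\<sigma> i) \<ge> R j)" using sc sn by (simp del: upt_Suc)
    qed
  qed
  moreover have B: "card {i\<in>{1..n}. R (\<sigma> i) \<ge> R j} = card {k\<in>{1..n+1} - {j}. R k \<ge> R j}"
  proof -
    have "\<sigma> ` {i\<in>{1..n}. R (\<sigma> i) \<ge> R j} = {k\<in>{1..n+1} - {j}. R k \<ge> R j}"
    proof -
      have inj: "inj \<sigma>" using perm by (rule permutes_inj)
      have "{1..n} = {1..n+1} - {n+1}" by auto
      then have "\<sigma> ` {1..n} = \<sigma> ` {1..n+1} - {\<sigma> (n+1)}"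
        using inj by (simp add: image_set_diff)
      also have "\<dots> = {1..n+1} - {j}"
      proof -
        have "\<sigma> ` {1..n+1} = {1..n+1}" by (rule permutes_image[OF perm])
        moreover have "\<sigma> (n+1) = j" by (simp add: \<sigma>_def)
        ultimately show ?thesis by (simp only:)
      qed
      finally have im: "\<sigma> ` {1..n} = {1..n+1} - {j}" .
      have "\<sigma> ` {i\<in>{1..n}. R (\<sigma> i) \<ge> R j} = {k \<in> \<sigma> ` {1..n}. R k \<ge> R j}" by blast
      then show ?thesis using im by (simp only:)
    qed
    moreover have "inj_on \<sigma> {i\<in>{1..n}. R (\<sigma> i) \<ge> R j}"
      using permutes_inj[OF perm] by (rule inj_on_subset) simp
    ultimately show ?thesis using card_image by (metis (no_types))
  qed
  moreover have C: "card {k\<in>{1..n+1}. R k \<ge> R j} = card {k\<in>{1..n+1} - {j}. R k \<ge> R j} + 1"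
  proof -
    have "{k\<in>{1..n+1}. R k \<ge> R j} = insert j {k\<in>{1..n+1} - {j}. R k \<ge> R j}" using j by auto
    then show ?thesis by simp
  qed
  show ?thesis unfolding full_pvalue_def unfolding A B C by (simp add: len del: upt_Suc)
qed

lemma part1:
  assumes len: "length D = n"
    and ap: "\<forall>y\<in>Ys. \<forall>i\<in>{1..n+1}. 0 \<le> tau y i \<and>
            \<bar>conf_score fit s D x y i - St y i\<bar> \<le> tau y i"
  shows "full_region Ys fit s D x \<alpha> \<subseteq> approx_region Ys n St tau \<alpha>"
proof
  fix y assume y: "y \<in> full_region Ys fit s D x \<alpha>"
  then have yY: "y \<in> Ys" and pv: "full_pvalue fit s D x y > \<alpha>" by (auto simp: full_region_def)
  have sub: "{i \<in> {1..n}. conf_score fit s D x y i \<ge> conf_score fit s D x y (n + 1)}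
      \<subseteq> {i \<in> {1..n}. St y i + tau y i \<ge> St y (n + 1) - tau y (n + 1)}"
  proof safe
    fix i assume i: "i \<in> {1..n}" and ge: "conf_score fit s D x y i \<ge> conf_score fit s D x y (n + 1)"
    have a: "\<bar>conf_score fit s D x y i - St y i\<bar> \<le> tau y i" using ap yY i by auto
    have b: "\<bar>conf_score fit s D x y (n+1) - St y (n+1)\<bar> \<le> tau y (n+1)" using ap yY by auto
    show "St y i + tau y i \<ge> St y (n + 1) - tau y (n + 1)" using a b ge by linarith
  qed
  have "card {i \<in> {1..n}. conf_score fit s D x y i \<ge> conf_score fit s D x y (n + 1)}
      \<le> card {i \<in> {1..n}. St y i + tau y i \<ge> St y (n + 1) - tau y (n + 1)}"
    by (rule card_mono[OF _ sub]) simp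
  then have "full_pvalue fit s D x y \<le> approx_pvalue n St tau y"
    unfolding full_pvalue_def approx_pvalue_def len by (simp add: divide_right_mono)
  then show "y \<in> approx_region Ys n St tau \<alpha>" using pv yY by (simp add: approx_region_def)
qed


theorem lemma5:
  fixes \<alpha> :: real and n :: nat and Ys :: "real set"
    and fit :: "('a::euclidean_space \<times> real) list \<Rightarrow> 'a \<Rightarrow> real"
    and s :: "real \<Rightarrow> real \<Rightarrow> real"
  assumes alpha: "0 < \<alpha>" "\<alpha> < 1"
    and s_nonneg: "\<And>u v. u \<in> Ys \<Longrightarrow> v \<in> Ys \<Longrightarrow> s u v \<ge> 0"
  shows
    "(\<forall>(D :: ('a \<times> real) list) x (St :: real \<Rightarrow> nat \<Rightarrow> real) tau.
        length D = n \<longrightarrow>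
        (\<forall>y\<in>Ys. \<forall>i\<in>{1..n+1}. 0 \<le> tau y i \<and>
            \<bar>conf_score fit s D x y i - St y i\<bar> \<le> tau y i) \<longrightarrow>
        full_region Ys fit s D x \<alpha> \<subseteq> approx_region Ys n St tau \<alpha>)
     \<and>
     (\<forall>(M :: 'w measure) (X :: nat \<Rightarrow> 'w \<Rightarrow> 'a) (Y :: nat \<Rightarrow> 'w \<Rightarrow> real)
        (St :: 'w \<Rightarrow> real \<Rightarrow> nat \<Rightarrow> real) tau.
        prob_space M \<longrightarrow>
        (\<forall>i\<in>{1..n+1}. X i \<in> borel_measurable M \<and> Y i \<in> borel_measurable M) \<longrightarrow>
        (\<forall>i\<in>{1..n+1}. \<forall>\<omega>\<in>space M. Y i \<omega> \<in> Ys) \<longrightarrow>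
        \<comment> \<open>exchangeability of (X_1,Y_1),...,(X_{n+1},Y_{n+1})\<close>
        (\<forall>\<sigma>. \<sigma> permutes {1..n+1} \<longrightarrow>
            distr M (PiM {1..n+1} (\<lambda>_. borel)) (\<lambda>\<omega>. \<lambda>i\<in>{1..n+1}. (X (\<sigma> i) \<omega>, Y (\<sigma> i) \<omega>))
          = distr M (PiM {1..n+1} (\<lambda>_. borel)) (\<lambda>\<omega>. \<lambda>i\<in>{1..n+1}. (X i \<omega>, Y i \<omega>))) \<longrightarrow>
        \<comment> \<open>predictor invariant to permutations of its training data\<close>
        (\<forall>D1 D2. mset D1 = mset D2 \<longrightarrow> fit D1 = fit D2) \<longrightarrow>
        \<comment> \<open>approximation scheme, for each realisation of the data\<close>
        (\<forall>\<omega>\<in>space M. \<forall>y\<in>Ys. \<forall>i\<in>{1..n+1}. 0 \<le> tau \<omega> y i \<and>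
            \<bar>conf_score fit s (map (\<lambda>j. (X j \<omega>, Y j \<omega>)) [1..<n+1]) (X (n+1) \<omega>) y i
               - St \<omega> y i\<bar> \<le> tau \<omega> y i) \<longrightarrow>
        \<comment> \<open>measurability of the events involved\<close>
        full_cover_set Ys fit s n \<alpha> \<in> sets (PiM {1..n+1} (\<lambda>_. borel)) \<longrightarrow>
        {\<omega> \<in> space M. Y (n+1) \<omega> \<in> approx_region Ys n (St \<omega>) (tau \<omega>) \<alpha>} \<in> sets M \<longrightarrow>
        measure M {\<omega> \<in> space M. Y (n+1) \<omega> \<in> approx_region Ys n (St \<omega>) (tau \<omega>) \<alpha>}
          \<ge> measure M {\<omega> \<in> space M.
               Y (n+1) \<omega> \<in> full_region Ys fit s (map (\<lambda>j. (X j \<omega>, Y j \<omega>)) [1..<n+1]) (X (n+1) \<omega>) \<alpha>}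
        \<and> measure M {\<omega> \<in> space M.
               Y (n+1) \<omega> \<in> full_region Ys fit s (map (\<lambda>j. (X j \<omega>, Y j \<omega>)) [1..<n+1]) (X (n+1) \<omega>) \<alpha>}
          \<ge> 1 - \<alpha>)"
  proof -
  show ?thesis (is "?A \<and> ?B")
  proof (rule conjI)
  show ?A by (intro allI impI) (rule part1)
  show ?B
  proof (intro allI impI)
  fix M :: "'w measure" and X :: "nat \<Rightarrow> 'w \<Rightarrow> 'a" and Y :: "nat \<Rightarrow> 'w \<Rightarrow> real"
    and St :: "'w \<Rightarrow> real \<Rightarrow> nat \<Rightarrow> real" and tau
  assume P: "prob_space M"
    and meas: "\<forall>i\<in>{1..n+1}. X i \<in> borel_measurable M \<and> Y i \<in> borel_measurable M"
    and inYs: "\<forall>i\<in>{1..n+1}. \<forall>\<omega>\<in>space M. Y i \<omega> \<in> Ys"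
    and exch: "\<forall>\<sigma>. \<sigma> permutes {1..n+1} \<longrightarrow>
            distr M (PiM {1..n+1} (\<lambda>_. borel)) (\<lambda>\<omega>. \<lambda>i\<in>{1..n+1}. (X (\<sigma> i) \<omega>, Y (\<sigma> i) \<omega>))
          = distr M (PiM {1..n+1} (\<lambda>_. borel)) (\<lambda>\<omega>. \<lambda>i\<in>{1..n+1}. (X i \<omega>, Y i \<omega>))"
    and inv: "\<forall>D1 D2. mset D1 = mset D2 \<longrightarrow> fit D1 = fit D2"
    and ap: "\<forall>\<omega>\<in>space M. \<forall>y\<in>Ys. \<forall>i\<in>{1..n+1}. 0 \<le> tau \<omega> y i \<and>
            \<bar>conf_score fit s (map (\<lambda>j. (X j \<omega>, Y j \<omega>)) [1..<n+1]) (X (n+1) \<omega>) y i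
               - St \<omega> y i\<bar> \<le> tau \<omega> y i"
    and Emeas: "full_cover_set Ys fit s n \<alpha> \<in> sets (PiM {1..n+1} (\<lambda>_. borel))"
    and Ameas: "{\<omega> \<in> space M. Y (n+1) \<omega> \<in> approx_region Ys n (St \<omega>) (tau \<omega>) \<alpha>} \<in> sets M"
  interpret P: prob_space M by (rule P)
  define I where "I = {1..n+1}"
  define PI where "PI = (PiM I (\<lambda>_. borel) :: (nat \<Rightarrow> 'a \<times> real) measure)"
  define E where "E = full_cover_set Ys fit s n \<alpha>"
  define Zs where "Zs = (\<lambda>\<sigma> \<omega>. \<lambda>i\<in>I. (X (\<sigma> i) \<omega>, Y (\<sigma> i) \<omega>))"
  define F where "F = {\<omega> \<in> space M.
               Y (n+1) \<omega> \<in> full_region Ys fit s (map (\<lambda>j. (X j \<omega>, Y j \<omega>)) [1..<n+1]) (X (n+1) \<omega>) \<alpha>}"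
  define A where "A = {\<omega> \<in> space M. Y (n+1) \<omega> \<in> approx_region Ys n (St \<omega>) (tau \<omega>) \<alpha>}"
  define tr where "tr = (\<lambda>j::nat. Transposition.transpose j (n+1))"
  have cI: "card I = n + 1" by (simp add: I_def)
  have Eset: "E \<in> sets PI" using Emeas by (simp add: E_def PI_def I_def)
  have trp: "tr j permutes I" if "j \<in> I" for j
    unfolding tr_def using that by (intro permutes_swap_id) (auto simp: I_def)
  have Zm: "Zs \<sigma> \<in> measurable M PI" if "\<And>i. i \<in> I \<Longrightarrow> \<sigma> i \<in> I" for \<sigma>
    unfolding Zs_def PI_def
  proof (rule measurable_restrict)
    fix i assume "i \<in> I"
    then have "\<sigma> i \<in> {1..n+1}" using that by (simp add: I_def)
    then have "X (\<sigma> i) \<in> borel_measurable M" "Y (\<sigma> i) \<in> borel_measurable M" using meas by auto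
    then show "(\<lambda>\<omega>. (X (\<sigma> i) \<omega>, Y (\<sigma> i) \<omega>)) \<in> borel_measurable M"
      by (rule borel_measurable_Pair)
  qed
  have Zid: "Zs id \<in> measurable M PI" by (rule Zm) simp
  have Ztr: "Zs (tr j) \<in> measurable M PI" if "j \<in> I" for j
    by (rule Zm) (use trp[OF that] in \<open>simp add: permutes_in_image\<close>)
  have mapeq: "map (Zs id \<omega>) [1..<n+1] = map (\<lambda>j. (X j \<omega>, Y j \<omega>)) [1..<n+1]" for \<omega>
    by (rule map_cong) (auto simp: Zs_def I_def)
  have lasteq: "Zs id \<omega> (n+1) = (X (n+1) \<omega>, Y (n+1) \<omega>)" for \<omega>
    by (simp add: Zs_def I_def)
  have memE: "Zs id \<omega> \<in> E \<longleftrightarrow> Zs id \<omega> \<in> space PI \<and>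
      Y (n+1) \<omega> \<in> full_region Ys fit s (map (\<lambda>j. (X j \<omega>, Y j \<omega>)) [1..<n+1]) (X (n+1) \<omega>) \<alpha>" for \<omega>
  proof -
    have "Zs id \<omega> \<in> E \<longleftrightarrow> Zs id \<omega> \<in> space PI \<and>
      snd (Zs id \<omega> (n+1)) \<in> full_region Ys fit s (map (Zs id \<omega>) [1..<n+1]) (fst (Zs id \<omega> (n+1))) \<alpha>"
      unfolding E_def full_cover_set_def PI_def I_def by (rule mem_Collect_eq)
    then show ?thesis unfolding mapeq lasteq fst_conv snd_conv .
  qed
  have FZ: "F = Zs id -` E \<inter> space M"
    using measurable_space[OF Zid] memE unfolding F_def by blast
  have sumeq: "measure M F = measure M (Zs (tr j) -` E \<inter> space M)" if "j \<in> I" for j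
  proof -
    have "measure M F = measure (distr M PI (Zs id)) E" using FZ measure_distr[OF Zid Eset] by simp
    also have "distr M PI (Zs id) = distr M PI (Zs (tr j))"
      using exch trp[OF that] by (simp add: Zs_def PI_def I_def)
    also have "measure (distr M PI (Zs (tr j))) E = measure M (Zs (tr j) -` E \<inter> space M)"
      by (rule measure_distr[OF Ztr[OF that] Eset])
    finally show ?thesis .
  qed
  define B where "B = (\<lambda>j. Zs (tr j) -` E \<inter> space M)"
  have Bsets: "B j \<in> sets M" if "j \<in> I" for j
    unfolding B_def using Ztr[OF that] Eset by (rule measurable_sets)
  have count: "real (card {j\<in>I. \<omega> \<in> B j}) \<ge> (real n + 1) * (1 - \<alpha>)" if \<omega>: "\<omega> \<in> space M" for \<omega>
  proof -
    define z where "z = (\<lambda>i. (X i \<omega>, Y i \<omega>))"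
    define R where "R = (\<lambda>k. s (snd (z k)) (fit (map z [1..<n+2]) (fst (z k))))"
    define Fl where "Fl = {j\<in>I. real (card {k\<in>I. R k \<ge> R j}) \<le> \<alpha> * (real n + 1)}"
    have inv': "\<And>D1 D2. mset D1 = mset D2 \<Longrightarrow> fit D1 = fit D2" using inv by blast
    have memB: "\<omega> \<in> B j \<longleftrightarrow> j \<notin> Fl" if j: "j \<in> I" for j
    proof -
      define w where "w = (\<lambda>i\<in>{1..n+1}. z (Transposition.transpose j (n+1) i))"
      have wZ: "Zs (tr j) \<omega> = w" by (simp add: Zs_def w_def z_def tr_def I_def)
      have wsp: "w \<in> space PI" using measurable_space[OF Ztr[OF j] \<omega>] wZ by simp
      have wn: "w (n+1) = z j" by (simp add: w_def)
      have yY: "Y j \<omega> \<in> Ys" using inYs j \<omega> by (auto simp: I_def)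
      have pv: "full_pvalue fit s (map w [1..<n+1]) (fst (w (n+1))) (snd (w (n+1)))
          = real (card {k\<in>{1..n+1}. R k \<ge> R j}) / (real n + 1)"
      proof -
        have jI: "j \<in> {1..n+1}" using j by (simp add: I_def)
        show ?thesis unfolding w_def R_def by (rule key[OF inv' jI])
      qed
      have "\<omega> \<in> B j \<longleftrightarrow> w \<in> E" using \<omega> wZ by (simp add: B_def)
      also have "\<dots> \<longleftrightarrow> w \<in> space PI \<and> snd (w (n+1)) \<in> full_region Ys fit s (map w [1..<n+1]) (fst (w (n+1))) \<alpha>"
        unfolding E_def full_cover_set_def PI_def I_def by (rule mem_Collect_eq)
      also have "\<dots> \<longleftrightarrow> full_pvalue fit s (map w [1..<n+1]) (fst (w (n+1))) (snd (w (n+1))) > \<alpha>"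
      proof -
        have "snd (w (n+1)) \<in> Ys" using yY by (simp only: wn z_def snd_conv)
        then show ?thesis using wsp by (simp only: full_region_def mem_Collect_eq simp_thms)
      qed
      also have "\<dots> \<longleftrightarrow> \<alpha> < real (card {k\<in>I. R k \<ge> R j}) / (real n + 1)"
        unfolding pv I_def ..
      also have "\<dots> \<longleftrightarrow> \<alpha> * (real n + 1) < real (card {k\<in>I. R k \<ge> R j})"
        by (simp add: pos_less_divide_eq)
      also have "\<dots> \<longleftrightarrow> j \<notin> Fl" using j by (auto simp: Fl_def)
      finally show ?thesis .
    qed
    have finI: "finite I" by (simp add: I_def)
    have "{j\<in>I. \<omega> \<in> B j} = I - Fl" using memB by blast
    moreover have "Fl \<subseteq> I" by (auto simp: Fl_def)
    ultimately have "card {j\<in>I. \<omega> \<in> B j} = card I - card Fl"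
      using finI by (simp add: card_Diff_subset finite_subset)
    moreover have "card Fl \<le> card I" using \<open>Fl \<subseteq> I\<close> finI by (rule card_mono[rotated])
    moreover have "real (card Fl) \<le> \<alpha> * (real n + 1)"
      unfolding Fl_def using finI alpha by (intro count_fail) auto
    ultimately show ?thesis using cI by (simp add: of_nat_diff algebra_simps)
  qed
  have "(\<Sum>j\<in>I. measure M (B j)) = (\<Sum>j\<in>I. measure M F)"
    by (rule sum.cong[OF refl]) (simp add: B_def sumeq)
  then have "(real n + 1) * measure M F = (\<Sum>j\<in>I. measure M (B j))"
    using cI by simp
  also have "\<dots> = (\<Sum>j\<in>I. integral\<^sup>L M (indicator (B j)))"
    using Bsets by simp
  also have "\<dots> = integral\<^sup>L M (\<lambda>\<omega>. \<Sum>j\<in>I. indicator (B j) \<omega>)"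
    by (subst Bochner_Integration.integral_sum) (use Bsets in \<open>auto intro!: integrable_real_indicator simp: P.emeasure_eq_measure\<close>)
  also have "\<dots> \<ge> integral\<^sup>L M (\<lambda>\<omega>. (real n + 1) * (1 - \<alpha>))"
  proof (rule integral_mono)
    show "integrable M (\<lambda>\<omega>. \<Sum>j\<in>I. indicator (B j) \<omega> :: real)"
      by (rule Bochner_Integration.integrable_sum) (use Bsets in \<open>auto intro!: integrable_real_indicator simp: P.emeasure_eq_measure\<close>)
    show "integrable M (\<lambda>\<omega>. (real n + 1) * (1 - \<alpha>))" by simp
    fix \<omega> assume "\<omega> \<in> space M"
    have "(\<Sum>j\<in>I. indicator (B j) \<omega> :: real) = real (card {j\<in>I. \<omega> \<in> B j})"
    proof -
      have "(\<Sum>j\<in>I. indicator (B j) \<omega> :: real) = (\<Sum>j\<in>I. if \<omega> \<in> B j then 1 else 0)"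
        by (rule sum.cong) (auto simp: indicator_def)
      also have "\<dots> = (\<Sum>j\<in>{j\<in>I. \<omega> \<in> B j}. 1)"
        by (rule sum.inter_filter[symmetric]) (simp add: I_def)
      finally show ?thesis by simp
    qed
    then show "(real n + 1) * (1 - \<alpha>) \<le> (\<Sum>j\<in>I. indicator (B j) \<omega>)"
      using count[OF \<open>\<omega> \<in> space M\<close>] by simp
  qed
  finally have "(real n + 1) * (1 - \<alpha>) \<le> (real n + 1) * measure M F" by (simp add: P.prob_space)
  then have cov: "1 - \<alpha> \<le> measure M F" by simp
  have "F \<subseteq> A"
  proof
    fix \<omega> assume "\<omega> \<in> F"
    then have \<omega>: "\<omega> \<in> space M" and y: "Y (n+1) \<omega> \<in> full_region Ys fit s (map (\<lambda>j. (X j \<omega>, Y j \<omega>)) [1..<n+1]) (X (n+1) \<omega>) \<alpha>"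
      by (auto simp: F_def)
    have "full_region Ys fit s (map (\<lambda>j. (X j \<omega>, Y j \<omega>)) [1..<n+1]) (X (n+1) \<omega>) \<alpha>
        \<subseteq> approx_region Ys n (St \<omega>) (tau \<omega>) \<alpha>"
      by (rule part1) (use ap \<omega> in auto)
    then show "\<omega> \<in> A" using y \<omega> by (auto simp: A_def)
  qed
  then have "measure M A \<ge> measure M F" using Ameas by (intro P.finite_measure_mono) (auto simp: A_def)
  then show "measure M {\<omega> \<in> space M. Y (n+1) \<omega> \<in> approx_region Ys n (St \<omega>) (tau \<omega>) \<alpha>}
          \<ge> measure M {\<omega> \<in> space M.
               Y (n+1) \<omega> \<in> full_region Ys fit s (map (\<lambda>j. (X j \<omega>, Y j \<omega>)) [1..<n+1]) (X (n+1) \<omega>) \<alpha>}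
        \<and> measure M {\<omega> \<in> space M.
               Y (n+1) \<omega> \<in> full_region Ys fit s (map (\<lambda>j. (X j \<omega>, Y j \<omega>)) [1..<n+1]) (X (n+1) \<omega>) \<alpha>}
          \<ge> 1 - \<alpha>" using cov by (simp add: A_def F_def)
  qed
  qed
qed

end
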